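(* Let $d_n$ be the number of equivalence classes of $n$-diagrams under the action of the dihedral group $D_{2n}$ of order $4n$ (the symmetry group of the $2n$-gon acting on its vertex set $[2n]$). Then $d_n\ge \underline{d}_n := (4n)^{-1}(2n-1)!!$ for $n\ge1$, and \[ d_n \sim \frac{(2n-1)!!}{4n} \quad \text{as } n\to\infty. \]
   Context: A chord diagram of order $n$ (an $n$-diagram) is a 3-regular graph on vertex set $[2n]=\{1,\dots,2n\}$ containing the $2n$-circuit $\Delta_{2n}=(1\,2\,\dots\,2n)$ as a subgraph; the edges not in $\Delta_{2n}$ are the chords (they form a perfect matching of $[2n]$). Given a group $G$ of permutations of $[2n]$ acting on $\Delta_{2n}$, two $n$-diagrams are equivalent if some $g\in G$ takes the chords of the first onto the chords of the second. *)

theory Defs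
  imports Main "HOL-Library.Landau_Symbols"
begin

text \<open>The chords of an n-diagram: a perfect matching of the vertex set [2n] = {1..2n}.
  (Chords may join cyclically adjacent vertices; the diagram is then a multigraph.)\<close>
definition chord_sets :: "nat \<Rightarrow> nat set set set" where
  "chord_sets n = {M. (\<forall>e\<in>M. e \<subseteq> {1..2*n} \<and> card e = 2) \<and>
                      (\<forall>v\<in>{1..2*n}. \<exists>!e\<in>M. v \<in> e)}"

definition rot :: "nat \<Rightarrow> nat \<Rightarrow> nat \<Rightarrow> nat" where
  "rot n k i = (i - 1 + k) mod (2*n) + 1"

definition refl :: "nat \<Rightarrow> nat \<Rightarrow> nat \<Rightarrow> nat" where
  "refl n k i = (2*n - (i - 1) + k) mod (2*n) + 1"

definition dihedral :: "nat \<Rightarrow> (nat \<Rightarrow> nat) set" where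
  "dihedral n = {rot n k | k. k < 2*n} \<union> {refl n k | k. k < 2*n}"

definition diagram_equiv :: "nat \<Rightarrow> (nat set set \<times> nat set set) set" where
  "diagram_equiv n = {(M, M'). M \<in> chord_sets n \<and> M' \<in> chord_sets n \<and>
                         (\<exists>g\<in>dihedral n. (\<lambda>e. g ` e) ` M = M')}"

definition d_num :: "nat \<Rightarrow> nat" where
  "d_num n = card (chord_sets n // diagram_equiv n)"

definition odd_dfact :: "nat \<Rightarrow> nat" where
  "odd_dfact n = (\<Prod>i<n. 2*i + 1)"

end

theory Submission
  imports Defs
begin



definition pm :: "'a set \<Rightarrow> 'a set set set" where
  "pm V = {M. (\<forall>e\<in>M. e \<subseteq> V \<and> card e = 2) \<and> (\<forall>v\<in>V. \<exists>!e\<in>M. v \<in> e)}"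

definition act :: "('a \<Rightarrow> 'a) \<Rightarrow> 'a set set \<Rightarrow> 'a set set" where
  "act g M = (\<lambda>e. g ` e) ` M"

lemma chord_sets_pm: "chord_sets n = pm {1..2*n}"
  unfolding chord_sets_def pm_def by simp

lemma pm_disj: "M \<in> pm V \<Longrightarrow> e \<in> M \<Longrightarrow> e' \<in> M \<Longrightarrow> x \<in> e \<Longrightarrow> x \<in> e' \<Longrightarrow> e = e'"
  unfolding pm_def by blast

lemma pm_sub: "M \<in> pm V \<Longrightarrow> e \<in> M \<Longrightarrow> e \<subseteq> V"
  and pm_card: "M \<in> pm V \<Longrightarrow> e \<in> M \<Longrightarrow> card e = 2"
  unfolding pm_def by auto

lemma pm_cover: "M \<in> pm V \<Longrightarrow> v \<in> V \<Longrightarrow> \<exists>e\<in>M. v \<in> e"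
  unfolding pm_def by blast

lemma pm_Pow: "pm V \<subseteq> Pow (Pow V)"
  unfolding pm_def by auto

lemma finite_pm: "finite V \<Longrightarrow> finite (pm V)"
  using pm_Pow finite_subset by (metis finite_Pow_iff)

lemma pm_diff:
  assumes M: "M \<in> pm V" and C: "C \<subseteq> M"
  shows "M - C \<in> pm (V - \<Union>C)"
  unfolding pm_def
proof (intro CollectI conjI ballI)
  fix e assume e: "e \<in> M - C"
  show "e \<subseteq> V - \<Union>C"
  proof
    fix x assume x: "x \<in> e"
    have "x \<notin> \<Union>C"
    proof
      assume "x \<in> \<Union>C"
      then obtain c where "c \<in> C" "x \<in> c" by auto
      with pm_disj[OF M, of e c x] e C x show False by auto
    qed
    then show "x \<in> V - \<Union>C" using pm_sub[OF M, of e] e x by auto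
  qed
  show "card e = 2" using pm_card[OF M] e by auto
next
  fix v assume v: "v \<in> V - \<Union>C"
  then obtain e where e: "e \<in> M" "v \<in> e" using pm_cover[OF M] by auto
  have "e \<notin> C" using v e by auto
  then show "\<exists>!e\<in>M - C. v \<in> e" using e pm_disj[OF M] by blast
qed

lemma pm_insert:
  assumes M: "M \<in> pm (V - {v,p})" and "v \<in> V" "p \<in> V" "v \<noteq> p"
  shows "insert {v,p} M \<in> pm V"
  unfolding pm_def
proof (intro CollectI conjI ballI)
  fix e assume "e \<in> insert {v,p} M"
  then show "e \<subseteq> V" using assms pm_sub[OF M] by auto
next
  fix e assume "e \<in> insert {v,p} M"
  then show "card e = 2" using assms pm_card[OF M] by auto
next
  fix x assume x: "x \<in> V"
  show "\<exists>!e\<in>insert {v, p} M. x \<in> e"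
  proof (cases "x = v \<or> x = p")
    case True
    then show ?thesis using pm_sub[OF M] by auto
  next
    case False
    then have "x \<in> V - {v,p}" using x by auto
    then obtain e where e: "e \<in> M" "x \<in> e" using pm_cover[OF M] by blast
    then show ?thesis using pm_disj[OF M] False by blast
  qed
qed

lemma pm_empty: "pm {} = {{}}"
proof -
  have "M = {}" if "M \<in> pm {}" for M
  proof (rule ccontr)
    assume "M \<noteq> {}"
    then obtain e where "e \<in> M" by auto
    then show False using pm_sub[OF that] pm_card[OF that] by fastforce
  qed
  moreover have "{} \<in> pm {}" unfolding pm_def by auto
  ultimately show ?thesis by auto
qed

lemma odd_dfact_Suc: "odd_dfact (Suc m) = (2*m+1) * odd_dfact m"
  unfolding odd_dfact_def by simp

lemma card_pm: "finite V \<Longrightarrow> card V = 2*m \<Longrightarrow> card (pm V) = odd_dfact m"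
proof (induction m arbitrary: V)
  case 0
  then have "V = {}" by auto
  then show ?case by (simp add: pm_empty odd_dfact_def)
next
  case (Suc m)
  have "V \<noteq> {}" using Suc.prems by auto
  then obtain v where v: "v \<in> V" by blast
  let ?S = "\<lambda>p. {M\<in>pm V. {v,p} \<in> M}"
  have split: "pm V = (\<Union>p\<in>V-{v}. ?S p)"
  proof (rule subset_antisym[OF subsetI])
    fix M assume M: "M \<in> pm V"
    obtain e where e: "e \<in> M" "v \<in> e" using pm_cover[OF M v] by blast
    have "card e = 2" "e \<subseteq> V" using pm_card[OF M e(1)] pm_sub[OF M e(1)] by auto
    then obtain a b where ab: "e = {a,b}" "a \<noteq> b" by (auto simp: card_2_iff)
    have "\<exists>p. e = {v,p} \<and> p \<noteq> v"
    proof (cases "v = a")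
      case True then show ?thesis using ab by blast
    next
      case False then have "v = b" using ab e(2) by blast
      then show ?thesis using ab by (metis insert_commute)
    qed
    then obtain p where p: "e = {v,p}" "p \<noteq> v" by blast
    then have "p \<in> V - {v}" using \<open>e \<subseteq> V\<close> by blast
    moreover have "M \<in> ?S p" using M e(1) p by blast
    ultimately show "M \<in> (\<Union>p\<in>V-{v}. ?S p)" by blast
  next
    show "(\<Union>p\<in>V-{v}. ?S p) \<subseteq> pm V" by blast
  qed
  have each: "card (?S p) = odd_dfact m" if p: "p \<in> V - {v}" for p
  proof -
    have "bij_betw (\<lambda>M. M - {{v,p}}) (?S p) (pm (V - {v,p}))"
    proof (rule bij_betw_byWitness[where f' = "insert {v,p}"])
      show "\<forall>M\<in>?S p. insert {v,p} (M - {{v,p}}) = M" by auto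
      show "\<forall>M\<in>pm (V - {v,p}). insert {v,p} M - {{v,p}} = M"
        using pm_sub by fastforce
      show "(\<lambda>M. M - {{v,p}}) ` ?S p \<subseteq> pm (V - {v,p})"
        using pm_diff[of _ V "{{v,p}}"] by auto
      show "insert {v,p} ` pm (V - {v,p}) \<subseteq> ?S p"
        using pm_insert[of _ V v p] p v by auto
    qed
    then have "card (?S p) = card (pm (V - {v,p}))" by (rule bij_betw_same_card)
    also have "\<dots> = odd_dfact m"
      using Suc.IH[of "V - {v,p}"] Suc.prems p v by (auto simp: card_Diff_subset)
    finally show ?thesis .
  qed
  have "card (pm V) = card (\<Union>p\<in>V-{v}. ?S p)" by (rule arg_cong[OF split])
  also have "\<dots> = (\<Sum>p\<in>V-{v}. card (?S p))"
  proof (rule card_UN_disjoint)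
    show "finite (V - {v})" using Suc by auto
    show "\<forall>p\<in>V-{v}. finite (?S p)" using finite_pm[OF Suc.prems(1)] by auto
    show "\<forall>p\<in>V-{v}. \<forall>q\<in>V-{v}. p \<noteq> q \<longrightarrow> ?S p \<inter> ?S q = {}"
    proof (intro ballI impI)
      fix p q assume "p \<in> V-{v}" "q \<in> V-{v}" "p \<noteq> q"
      then show "?S p \<inter> ?S q = {}" using pm_disj[of _ V "{v,p}" "{v,q}" v] by (auto simp: doubleton_eq_iff)
    qed
  qed
  also have "\<dots> = card (V - {v}) * odd_dfact m" using each by simp
  also have "\<dots> = odd_dfact (Suc m)" using Suc.prems v by (simp add: odd_dfact_Suc)
  finally show ?case .
qed




definition inv_pm :: "('a \<Rightarrow> 'a) \<Rightarrow> 'a set \<Rightarrow> 'a set set set" where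
  "inv_pm \<sigma> V = {M \<in> pm V. act \<sigma> M = M}"

fun aseq :: "nat \<Rightarrow> nat" where
  "aseq 0 = 1"
| "aseq (Suc 0) = 1"
| "aseq (Suc (Suc k)) = aseq (Suc k) + (2*k+4) * aseq k"

lemma aseq_pos: "aseq m \<ge> 1"
  by (induction m rule: aseq.induct) auto

lemma pm_partner:
  assumes M: "M \<in> pm V" and e: "e \<in> M" "v \<in> e"
  shows "\<exists>p. e = {v,p} \<and> p \<noteq> v \<and> p \<in> V"
proof -
  have ce: "card e = 2" "e \<subseteq> V" using pm_card[OF M e(1)] pm_sub[OF M e(1)] by auto
  then obtain a b where ab: "e = {a,b}" "a \<noteq> b" by (auto simp: card_2_iff)
  have "\<exists>p. e = {v,p} \<and> p \<noteq> v"
  proof (cases "v = a")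
    case True then show ?thesis using ab by blast
  next
    case False then have "v = b" using ab e(2) by blast
    then show ?thesis using ab by (metis insert_commute)
  qed
  then show ?thesis using ce by blast
qed

lemma pm_small:
  assumes fin: "finite V" and c: "card V \<le> 2"
  shows "card (pm V) \<le> 1"
proof -
  have sub: "M \<subseteq> {V}" if M: "M \<in> pm V" for M
  proof
    fix e assume e: "e \<in> M"
    have "card e = 2" "e \<subseteq> V" using pm_card[OF M e] pm_sub[OF M e] by auto
    then have "e = V" using card_subset_eq[OF fin, of e] c card_mono[OF fin, of e] by auto
    then show "e \<in> {V}" by simp
  qed
  have "M1 = M2" if M1: "M1 \<in> pm V" and M2: "M2 \<in> pm V" for M1 M2
  proof (cases "V = {}")
    case True
    then have "M1 = {}" "M2 = {}" using pm_empty M1 M2 by auto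
    then show ?thesis by simp
  next
    case False
    then obtain x where x: "x \<in> V" by blast
    have "M1 \<noteq> {}" using pm_cover[OF M1 x] by blast
    moreover have "M2 \<noteq> {}" using pm_cover[OF M2 x] by blast
    ultimately show ?thesis using sub[OF M1] sub[OF M2] by blast
  qed
  then show ?thesis using card_le_Suc0_iff_eq[OF finite_pm[OF fin]] by auto
qed

lemma act_diff:
  assumes "inj_on \<sigma> V" "M \<subseteq> Pow V" "C \<subseteq> Pow V"
  shows "act \<sigma> (M - C) = act \<sigma> M - act \<sigma> C"
  unfolding act_def
  by (rule inj_on_image_set_diff[OF inj_on_image_Pow[OF assms(1)]]) (use assms in auto)

lemma pm_PowV: "M \<in> pm V \<Longrightarrow> M \<subseteq> Pow V"
  using pm_sub by blast

lemma inv_orbit: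
  assumes M: "M \<in> inv_pm \<sigma> V" and c: "c \<in> M"
  shows "(\<sigma>^^j) ` c \<in> M"
proof (induction j)
  case 0 then show ?case using c by simp
next
  case (Suc j)
  have "\<sigma> ` ((\<sigma>^^j) ` c) \<in> act \<sigma> M" unfolding act_def using Suc by blast
  also have "act \<sigma> M = M" using M unfolding inv_pm_def by blast
  finally show ?case by (simp add: image_comp)
qed

lemma fix_sub:
  assumes "finite V" "V' \<subseteq> V" "card {x\<in>V. \<sigma> x = x} \<le> 2"
  shows "card {x\<in>V'. \<sigma> x = x} \<le> (2::nat)"
proof -
  have "card {x\<in>V'. \<sigma> x = x} \<le> card {x\<in>V. \<sigma> x = x}"
    by (rule card_mono) (use assms in auto)
  then show ?thesis using assms(3) by linarith
qed

lemma inv_bound: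
  "finite V \<Longrightarrow> inj_on \<sigma> V \<Longrightarrow> \<sigma> ` V = V \<Longrightarrow> card {x\<in>V. \<sigma> x = x} \<le> 2
   \<Longrightarrow> card V \<le> 2*m \<Longrightarrow> card (inv_pm \<sigma> V) \<le> aseq m"
proof (induction m arbitrary: V rule: less_induct)
  case (less m V)
  note fin = less.prems(1) and inj = less.prems(2) and surj = less.prems(3)
    and fix2 = less.prems(4) and cV = less.prems(5)
  have finI: "finite (inv_pm \<sigma> V)" using finite_pm[OF fin] unfolding inv_pm_def by auto
  show ?case
  proof (cases "card V \<le> 2")
    case True
    have "card (inv_pm \<sigma> V) \<le> card (pm V)"
      by (rule card_mono[OF finite_pm[OF fin]]) (auto simp: inv_pm_def)
    also have "\<dots> \<le> 1" using pm_small[OF fin True] .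
    also have "\<dots> \<le> aseq m" using aseq_pos .
    finally show ?thesis .
  next
    case False
    then have "m \<ge> 2" using cV by linarith
    then obtain k where m: "m = Suc (Suc k)" by (metis add_2_eq_Suc le_Suc_ex)
    have "\<exists>v\<in>V. \<sigma> v \<noteq> v"
    proof (rule ccontr)
      assume "\<not> ?thesis"
      then have "{x\<in>V. \<sigma> x = x} = V" by auto
      then show False using fix2 False by simp
    qed
    then obtain v where v: "v \<in> V" "\<sigma> v \<noteq> v" by blast
    define w where "w = \<sigma> v"
    have w: "w \<in> V" "w \<noteq> v" using v surj unfolding w_def by auto
    define S0 where "S0 = {M \<in> inv_pm \<sigma> V. {v,w} \<in> M}"
    define Sp where "Sp = (\<lambda>p. {M \<in> inv_pm \<sigma> V. {v,p} \<in> M \<and> \<sigma> ` {v,p} \<noteq> {v,p}})"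
    have cover: "inv_pm \<sigma> V \<subseteq> S0 \<union> (\<Union>p\<in>V. Sp p)"
    proof
      fix M assume MI: "M \<in> inv_pm \<sigma> V"
      then have M: "M \<in> pm V" unfolding inv_pm_def by blast
      obtain e where e: "e \<in> M" "v \<in> e" using pm_cover[OF M v(1)] by blast
      obtain p where p: "e = {v,p}" "p \<noteq> v" "p \<in> V" using pm_partner[OF M e] by blast
      show "M \<in> S0 \<union> (\<Union>p\<in>V. Sp p)"
      proof (cases "\<sigma> ` {v,p} = {v,p}")
        case True
        then have "\<sigma> v \<in> {v,p}" by blast
        then have "w = p" using v unfolding w_def by blast
        then show ?thesis using MI e p unfolding S0_def by blast
      next
        case False
        then show ?thesis using MI e p unfolding Sp_def by blast
      qed
    qed
    have c0: "card S0 \<le> aseq (Suc k)"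
    proof (cases "S0 = {}")
      case True then show ?thesis by simp
    next
      case False
      then obtain M0 where M0: "M0 \<in> inv_pm \<sigma> V" "{v,w} \<in> M0" unfolding S0_def by blast
      have M0p: "M0 \<in> pm V" using M0 unfolding inv_pm_def by blast
      have "\<sigma> ` {v,w} \<in> M0" using inv_orbit[OF M0(1) M0(2), of 1] by simp
      moreover have "w \<in> \<sigma> ` {v,w}" unfolding w_def by blast
      ultimately have eq: "\<sigma> ` {v,w} = {v,w}" using pm_disj[OF M0p _ M0(2), of _ w] by blast
      then have "\<sigma> w \<in> {v,w}" by blast
      moreover have "\<sigma> w \<noteq> w"
      proof
        assume "\<sigma> w = w"
        then have "\<sigma> w = \<sigma> v" unfolding w_def by simp
        then show False using inj v w unfolding inj_on_def by blast
      qed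
      ultimately have swv: "\<sigma> w = v" by blast
      define V' where "V' = V - {v,w}"
      have finV': "finite V'" using fin unfolding V'_def by auto
      have injV': "inj_on \<sigma> V'" using inj unfolding V'_def by (rule inj_on_subset) auto
      have surjV': "\<sigma> ` V' = V'"
        unfolding V'_def using inj_on_image_set_diff[OF inj, of V "{v,w}"] surj eq v w by auto
      have fixV': "card {x\<in>V'. \<sigma> x = x} \<le> 2"
        using fix_sub[OF fin _ fix2, of V'] unfolding V'_def by blast
      have cV': "card V' \<le> 2 * Suc k" using cV v w m unfolding V'_def by (auto simp: card_Diff_subset)
      have IH: "card (inv_pm \<sigma> V') \<le> aseq (Suc k)"
        using less.IH[of "Suc k" V'] m finV' injV' surjV' fixV' cV' by auto
      have "card S0 \<le> card (inv_pm \<sigma> V')"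
      proof (rule card_inj_on_le[where f = "\<lambda>M. M - {{v,w}}"])
        show "inj_on (\<lambda>M. M - {{v,w}}) S0"
          unfolding inj_on_def S0_def by (metis (no_types, lifting) insert_Diff mem_Collect_eq)
        show "(\<lambda>M. M - {{v,w}}) ` S0 \<subseteq> inv_pm \<sigma> V'"
        proof
          fix N assume "N \<in> (\<lambda>M. M - {{v,w}}) ` S0"
          then obtain M where M: "M \<in> inv_pm \<sigma> V" "{v,w} \<in> M" "N = M - {{v,w}}"
            unfolding S0_def by blast
          have Mp: "M \<in> pm V" using M unfolding inv_pm_def by blast
          have "N \<in> pm V'" using pm_diff[OF Mp, of "{{v,w}}"] M unfolding V'_def by auto
          moreover have "act \<sigma> N = N"
          proof -
            have "act \<sigma> N = act \<sigma> M - act \<sigma> {{v,w}}"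
              unfolding M(3) by (rule act_diff[OF inj pm_PowV[OF Mp]]) (use v w in auto)
            also have "act \<sigma> {{v,w}} = {{v,w}}" unfolding act_def using eq by simp
            also have "act \<sigma> M = M" using M unfolding inv_pm_def by blast
            finally show ?thesis using M(3) by simp
          qed
          ultimately show "N \<in> inv_pm \<sigma> V'" unfolding inv_pm_def by blast
        qed
        show "finite (inv_pm \<sigma> V')" using finite_pm[OF finV'] unfolding inv_pm_def by auto
      qed
      then show ?thesis using IH by simp
    qed
    have cp: "card (Sp p) \<le> aseq k" if pV: "p \<in> V" for p
    proof (cases "Sp p = {}")
      case True then show ?thesis by simp
    next
      case False
      define c where "c = {v,p}"
      define C where "C = range (\<lambda>j. (\<sigma>^^j) ` c)"
      then obtain M0 where M0: "M0 \<in> inv_pm \<sigma> V" "c \<in> M0" "\<sigma> ` c \<noteq> c"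
        using False unfolding Sp_def c_def by blast
      have M0p: "M0 \<in> pm V" using M0 unfolding inv_pm_def by blast
      have CM: "C \<subseteq> M" if "M \<in> inv_pm \<sigma> V" "c \<in> M" for M
        unfolding C_def using inv_orbit[OF that] by blast
      have CV: "C \<subseteq> Pow V" using CM[OF M0(1,2)] pm_PowV[OF M0p] by blast
      have finC: "finite C" using CV fin by (meson finite_Pow_iff finite_subset)
      have actC_sub: "act \<sigma> C \<subseteq> C"
      proof
        fix x assume "x \<in> act \<sigma> C"
        then obtain j where "x = \<sigma> ` ((\<sigma>^^j) ` c)" unfolding act_def C_def by blast
        then have "x = (\<sigma>^^(Suc j)) ` c" by (simp add: image_comp)
        then show "x \<in> C" unfolding C_def by blast
      qed
      have actC: "act \<sigma> C = C"
        unfolding act_def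
        by (rule endo_inj_surj[OF finC]) (use actC_sub inj_on_subset[OF inj_on_image_Pow[OF inj] CV] in \<open>auto simp: act_def\<close>)
      define R where "R = \<Union>C"
      have RV: "R \<subseteq> V" using CV unfolding R_def by blast
      have sR: "\<sigma> ` R = R"
      proof -
        have "\<sigma> ` R = \<Union>(act \<sigma> C)" unfolding R_def act_def by blast
        then show ?thesis using actC unfolding R_def by simp
      qed
      have cC: "c \<in> C" unfolding C_def using rangeI[of "\<lambda>j. (\<sigma>^^j) ` c" 0] by simp
      have scC: "\<sigma> ` c \<in> C" unfolding C_def using rangeI[of "\<lambda>j. (\<sigma>^^j) ` c" 1] by simp
      have scM: "\<sigma> ` c \<in> M0" using CM[OF M0(1,2)] scC by blast
      have disj: "c \<inter> \<sigma> ` c = {}" using pm_disj[OF M0p M0(2) scM] M0(3) by blast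
      have "card (c \<union> \<sigma> ` c) = 4"
        using card_Un_disjoint[OF _ _ disj] pm_card[OF M0p M0(2)] pm_card[OF M0p scM]
        by (metis add_2_eq_Suc' card.infinite numeral_Bit0 numeral_eq_Suc zero_neq_numeral)
      moreover have "c \<union> \<sigma> ` c \<subseteq> R" using cC scC unfolding R_def by blast
      ultimately have cR: "card R \<ge> 4" using card_mono[of R] RV fin finite_subset by metis
      define V' where "V' = V - R"
      have finV': "finite V'" using fin unfolding V'_def by auto
      have injV': "inj_on \<sigma> V'" using inj unfolding V'_def by (rule inj_on_subset) auto
      have surjV': "\<sigma> ` V' = V'"
        unfolding V'_def using inj_on_image_set_diff[OF inj, of V R] surj sR RV by auto
      have fixV': "card {x\<in>V'. \<sigma> x = x} \<le> 2"
        using fix_sub[OF fin _ fix2, of V'] unfolding V'_def by blast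
      have "card V' = card V - card R" unfolding V'_def
        using card_Diff_subset[OF finite_subset[OF RV fin] RV] .
      then have cV': "card V' \<le> 2 * k" using cV cR m by simp
      have IH: "card (inv_pm \<sigma> V') \<le> aseq k"
        using less.IH[of k V'] m finV' injV' surjV' fixV' cV' by auto
      have "card (Sp p) \<le> card (inv_pm \<sigma> V')"
      proof (rule card_inj_on_le[where f = "\<lambda>M. M - C"])
        show "inj_on (\<lambda>M. M - C) (Sp p)"
        proof (rule inj_onI)
          fix M1 M2 assume "M1 \<in> Sp p" "M2 \<in> Sp p" "M1 - C = M2 - C"
          moreover have "C \<subseteq> M1" "C \<subseteq> M2" using CM calculation(1,2) unfolding Sp_def c_def by auto
          ultimately show "M1 = M2" by blast
        qed
        show "(\<lambda>M. M - C) ` Sp p \<subseteq> inv_pm \<sigma> V'"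
        proof
          fix N assume "N \<in> (\<lambda>M. M - C) ` Sp p"
          then obtain M where M: "M \<in> inv_pm \<sigma> V" "c \<in> M" "N = M - C"
            unfolding Sp_def c_def by blast
          have Mp: "M \<in> pm V" using M unfolding inv_pm_def by blast
          have "N \<in> pm V'" using pm_diff[OF Mp CM[OF M(1,2)]] M unfolding V'_def R_def by auto
          moreover have "act \<sigma> N = N"
          proof -
            have "act \<sigma> N = act \<sigma> M - act \<sigma> C"
              unfolding M(3) by (rule act_diff[OF inj pm_PowV[OF Mp] CV])
            also have "act \<sigma> M = M" using M unfolding inv_pm_def by blast
            finally show ?thesis using M(3) actC by simp
          qed
          ultimately show "N \<in> inv_pm \<sigma> V'" unfolding inv_pm_def by blast
        qed
        show "finite (inv_pm \<sigma> V')" using finite_pm[OF finV'] unfolding inv_pm_def by auto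
      qed
      then show ?thesis using IH by simp
    qed
    have "card (inv_pm \<sigma> V) \<le> card (S0 \<union> (\<Union>p\<in>V. Sp p))"
    proof (rule card_mono[OF _ cover])
      have "S0 \<union> (\<Union>p\<in>V. Sp p) \<subseteq> inv_pm \<sigma> V" unfolding S0_def Sp_def by blast
      then show "finite (S0 \<union> (\<Union>p\<in>V. Sp p))" using finI finite_subset by blast
    qed
    also have "\<dots> \<le> card S0 + card (\<Union>p\<in>V. Sp p)" by (rule card_Un_le)
    also have "card (\<Union>p\<in>V. Sp p) \<le> (\<Sum>p\<in>V. card (Sp p))" by (rule card_UN_le[OF fin])
    also have "\<dots> \<le> (\<Sum>p\<in>V. aseq k)" by (rule sum_mono) (use cp in auto)
    also have "\<dots> = card V * aseq k" by simp
    also have "\<dots> \<le> (2*k+4) * aseq k" using cV m by (intro mult_right_mono) auto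
    finally have "card (inv_pm \<sigma> V) \<le> aseq (Suc k) + (2*k+4) * aseq k" using c0 by linarith
    then show ?thesis using m by simp
  qed
qed




lemma V_res: "i \<in> {1..2*n} \<Longrightarrow> int i mod (2 * int n) = (if i = 2*n then 0 else int i)"
  by auto

lemma V_unique:
  assumes "i \<in> {1..2*n}" "j \<in> {1..2*n}" "int i mod (2 * int n) = int j mod (2 * int n)"
  shows "i = j"
  using assms V_res[OF assms(1)] V_res[OF assms(2)] by (auto split: if_splits)

lemma rot_in: "n \<ge> 1 \<Longrightarrow> rot n k i \<in> {1..2*n}"
  unfolding rot_def by (auto simp: Suc_leI)

lemma refl_in: "n \<ge> 1 \<Longrightarrow> refl n k i \<in> {1..2*n}"
  unfolding refl_def by (auto simp: Suc_leI)

lemma rot_res: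
  assumes "i \<in> {1..2*n}"
  shows "int (rot n k i) mod (2 * int n) = (int i + int k) mod (2 * int n)"
proof -
  have "int (rot n k i) = (int i - 1 + int k) mod (2 * int n) + 1"
    using assms unfolding rot_def by (simp add: zmod_int of_nat_diff algebra_simps)
  then have "int (rot n k i) mod (2 * int n) = ((int i - 1 + int k) mod (2 * int n) + 1) mod (2 * int n)"
    by simp
  also have "\<dots> = (int i - 1 + int k + 1) mod (2 * int n)" by (rule mod_add_left_eq)
  finally show ?thesis by simp
qed

lemma refl_res:
  assumes "i \<in> {1..2*n}"
  shows "int (refl n k i) mod (2 * int n) = (int k + 2 - int i) mod (2 * int n)"
proof -
  have "int (refl n k i) = (2 * int n - int i + 1 + int k) mod (2 * int n) + 1"
    using assms unfolding refl_def by (simp add: zmod_int of_nat_diff algebra_simps)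
  then have "int (refl n k i) mod (2 * int n) = (2 * int n - int i + 1 + int k + 1) mod (2 * int n)"
    by (simp add: mod_add_left_eq)
  also have "\<dots> = ((int k + 2 - int i) + 2 * int n) mod (2 * int n)" by (simp add: algebra_simps)
  also have "\<dots> = (int k + 2 - int i) mod (2 * int n)" by simp
  finally show ?thesis .
qed

lemma kres: "k < 2*n \<Longrightarrow> int k mod (2 * int n) = int k"
  by simp


lemma res_add: "(int x mod (2*int n) + b) mod (2*int n) = (int x + b) mod (2*int n)"
  by (simp add: mod_simps)

lemma res_shift: "((x::int) mod m + y - z) mod m = (x + y - z) mod m"
  by (metis add_diff_eq mod_add_left_eq)

lemma res_shift2: "((y::int) + x mod m - z) mod m = (y + x - z) mod m"
  by (metis add.commute res_shift)

context
  fixes n :: nat and i :: nat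
  assumes n: "n \<ge> 1" and i: "i \<in> {1..2*n}"
begin

lemma rot0: "rot n 0 i = i"
  by (rule V_unique[OF rot_in[OF n] i]) (simp add: rot_res[OF i])

lemma rr: "rot n a (rot n b i) = rot n ((a+b) mod (2*n)) i"
proof (rule V_unique[OF rot_in[OF n] rot_in[OF n]])
  have "int (rot n a (rot n b i)) mod (2 * int n) = (int (rot n b i) + int a) mod (2 * int n)"
    using rot_res[OF rot_in[OF n]] by blast
  also have "\<dots> = (int (rot n b i) mod (2 * int n) + int a) mod (2 * int n)" by (simp add: mod_simps res_shift res_shift2)
  also have "\<dots> = (int i + int b + int a) mod (2 * int n)" unfolding rot_res[OF i] by (simp add: mod_simps res_shift res_shift2)
  also have "\<dots> = (int i + int ((a+b) mod (2*n))) mod (2 * int n)" by (simp add: zmod_int mod_simps res_shift res_shift2 algebra_simps)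
  also have "\<dots> = int (rot n ((a+b) mod (2*n)) i) mod (2 * int n)" using rot_res[OF i] by simp
  finally show "int (rot n a (rot n b i)) mod (2 * int n) = int (rot n ((a+b) mod (2*n)) i) mod (2 * int n)" .
qed

lemma ff: "b \<le> 2*n \<Longrightarrow> refl n a (refl n b i) = rot n ((a + 2*n - b) mod (2*n)) i"
proof (rule V_unique[OF refl_in[OF n] rot_in[OF n]])
  assume b: "b \<le> 2*n"
  have "int (refl n a (refl n b i)) mod (2 * int n) = (int a + 2 - int (refl n b i)) mod (2 * int n)"
    using refl_res[OF refl_in[OF n]] by blast
  also have "\<dots> = (int a + 2 - int (refl n b i) mod (2 * int n)) mod (2 * int n)" by (simp add: mod_simps res_shift res_shift2)
  also have "\<dots> = (int a + 2 - (int b + 2 - int i)) mod (2 * int n)" unfolding refl_res[OF i] by (simp add: mod_simps res_shift res_shift2)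
  also have "\<dots> = (int i + int ((a + 2*n - b) mod (2*n))) mod (2 * int n)"
  proof -
    have "int ((a + 2*n - b) mod (2*n)) = (int a + 2 * int n - int b) mod (2 * int n)"
      using b by (simp add: zmod_int of_nat_diff)
    then have "(int i + int ((a + 2*n - b) mod (2*n))) mod (2 * int n) = (int i + (int a + 2 * int n - int b)) mod (2 * int n)"
      by (simp add: mod_simps res_shift res_shift2)
    also have "\<dots> = ((int a + 2 - (int b + 2 - int i)) + 2 * int n) mod (2 * int n)" by (simp add: algebra_simps)
    finally show ?thesis by simp
  qed
  also have "\<dots> = int (rot n ((a + 2*n - b) mod (2*n)) i) mod (2 * int n)" using rot_res[OF i] by simp
  finally show "int (refl n a (refl n b i)) mod (2 * int n) = int (rot n ((a + 2*n - b) mod (2*n)) i) mod (2 * int n)" .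
qed

lemma rf: "rot n a (refl n b i) = refl n ((a+b) mod (2*n)) i"
proof (rule V_unique[OF rot_in[OF n] refl_in[OF n]])
  have "int (rot n a (refl n b i)) mod (2 * int n) = (int (refl n b i) + int a) mod (2 * int n)"
    using rot_res[OF refl_in[OF n]] by blast
  also have "\<dots> = (int (refl n b i) mod (2 * int n) + int a) mod (2 * int n)" by (simp add: mod_simps res_shift res_shift2)
  also have "\<dots> = (int b + 2 - int i + int a) mod (2 * int n)" unfolding refl_res[OF i] by (simp add: mod_simps res_shift res_shift2)
  also have "\<dots> = (int ((a+b) mod (2*n)) + 2 - int i) mod (2 * int n)" by (simp add: zmod_int mod_simps res_shift res_shift2 algebra_simps)
  also have "\<dots> = int (refl n ((a+b) mod (2*n)) i) mod (2 * int n)" using refl_res[OF i] by simp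
  finally show "int (rot n a (refl n b i)) mod (2 * int n) = int (refl n ((a+b) mod (2*n)) i) mod (2 * int n)" .
qed

lemma fr: "b \<le> 2*n \<Longrightarrow> refl n a (rot n b i) = refl n ((a + 2*n - b) mod (2*n)) i"
proof (rule V_unique[OF refl_in[OF n] refl_in[OF n]])
  assume b: "b \<le> 2*n"
  have "int (refl n a (rot n b i)) mod (2 * int n) = (int a + 2 - int (rot n b i)) mod (2 * int n)"
    using refl_res[OF rot_in[OF n]] by blast
  also have "\<dots> = (int a + 2 - int (rot n b i) mod (2 * int n)) mod (2 * int n)" by (simp add: mod_simps res_shift res_shift2)
  also have "\<dots> = (int a + 2 - (int i + int b)) mod (2 * int n)" unfolding rot_res[OF i] by (simp add: mod_simps res_shift res_shift2)
  also have "\<dots> = (int ((a + 2*n - b) mod (2*n)) + 2 - int i) mod (2 * int n)"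
  proof -
    have "int ((a + 2*n - b) mod (2*n)) = (int a + 2 * int n - int b) mod (2 * int n)"
      using b by (simp add: zmod_int of_nat_diff)
    then have "(int ((a + 2*n - b) mod (2*n)) + 2 - int i) mod (2 * int n) = ((int a + 2 * int n - int b) + 2 - int i) mod (2 * int n)"
      by (simp add: mod_simps res_shift res_shift2)
    also have "\<dots> = ((int a + 2 - (int i + int b)) + 2 * int n) mod (2 * int n)" by (simp add: algebra_simps)
    finally show ?thesis by simp
  qed
  also have "\<dots> = int (refl n ((a + 2*n - b) mod (2*n)) i) mod (2 * int n)" using refl_res[OF i] by simp
  finally show "int (refl n a (rot n b i)) mod (2 * int n) = int (refl n ((a + 2*n - b) mod (2*n)) i) mod (2 * int n)" .
qed

end




lemma rot_inj: "n \<ge> 1 \<Longrightarrow> inj_on (rot n k) {1..2*n}"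
proof (rule inj_onI)
  fix i j assume n: "n \<ge> 1" and i: "i \<in> {1..2*n}" and j: "j \<in> {1..2*n}" and e: "rot n k i = rot n k j"
  have "(int i + int k) mod (2 * int n) = (int j + int k) mod (2 * int n)"
    using rot_res[OF i, of k] rot_res[OF j, of k] e by simp
  then have "((int i + int k) mod (2 * int n) - int k) mod (2 * int n) = ((int j + int k) mod (2 * int n) - int k) mod (2 * int n)"
    by simp
  then have "int i mod (2 * int n) = int j mod (2 * int n)" by (simp add: mod_diff_left_eq)
  then show "i = j" using V_unique[OF i j] by simp
qed

lemma refl_inj: "n \<ge> 1 \<Longrightarrow> inj_on (refl n k) {1..2*n}"
proof (rule inj_onI)
  fix i j assume n: "n \<ge> 1" and i: "i \<in> {1..2*n}" and j: "j \<in> {1..2*n}" and e: "refl n k i = refl n k j"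
  have "(int k + 2 - int i) mod (2 * int n) = (int k + 2 - int j) mod (2 * int n)"
    using refl_res[OF i, of k] refl_res[OF j, of k] e by simp
  then have "(int k + 2 - (int k + 2 - int i) mod (2 * int n)) mod (2 * int n) = (int k + 2 - (int k + 2 - int j) mod (2 * int n)) mod (2 * int n)"
    by simp
  then have "int i mod (2 * int n) = int j mod (2 * int n)" by (simp add: mod_diff_right_eq)
  then show "i = j" using V_unique[OF i j] by simp
qed

lemma rot_nofix:
  assumes n: "n \<ge> 1" and k: "0 < k" "k < 2*n" and i: "i \<in> {1..2*n}"
  shows "rot n k i \<noteq> i"
proof
  assume e: "rot n k i = i"
  have "(int i + int k) mod (2 * int n) = int i mod (2 * int n)"
    using rot_res[OF i, of k] e by simp
  then have "((int i + int k) mod (2 * int n) - int i) mod (2 * int n) = (int i mod (2 * int n) - int i) mod (2 * int n)"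
    by simp
  then have "int k mod (2 * int n) = 0" by (simp add: mod_diff_left_eq)
  then show False using k by simp
qed

lemma refl_fix_pair:
  assumes n: "n \<ge> 1" and i: "i \<in> {1..2*n}" and j: "j \<in> {1..2*n}"
    and fi: "refl n k i = i" and fj: "refl n k j = j"
  shows "i = j \<or> i = j + n \<or> j = i + n"
proof -
  have "\<And>x. x \<in> {1..2*n} \<Longrightarrow> refl n k x = x \<Longrightarrow> (2 * int x) mod (2 * int n) = (int k + 2) mod (2 * int n)"
  proof -
    fix x assume x: "x \<in> {1..2*n}" and fx: "refl n k x = x"
    have "(int k + 2 - int x) mod (2 * int n) = int x mod (2 * int n)"
      by (metis fx refl_res[OF x])
    then have "(int x + (int k + 2 - int x) mod (2 * int n)) mod (2 * int n) = (int x + int x mod (2 * int n)) mod (2 * int n)"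
      by (rule arg_cong)
    then have "(int x + (int k + 2 - int x)) mod (2 * int n) = (int x + int x) mod (2 * int n)"
      by (simp only: mod_add_right_eq)
    moreover have "int x + (int k + 2 - int x) = int k + 2" by simp
    moreover have "int x + int x = 2 * int x" by simp
    ultimately show "(2 * int x) mod (2 * int n) = (int k + 2) mod (2 * int n)"
      by metis
  qed
  from this[OF i fi] this[OF j fj]
  have "(2 * int i) mod (2 * int n) = (2 * int j) mod (2 * int n)" by simp
  then have "2 * int n dvd 2 * int i - 2 * int j" by (simp only: mod_eq_dvd_iff)
  then have "2 * int n dvd 2 * (int i - int j)" by (simp only: right_diff_distrib)
  then have "int n dvd int i - int j" by (rule dvd_mult_cancel_left[THEN iffD1, THEN disjE]) auto
  then obtain t where t: "int i - int j = int n * t" by (auto simp: dvd_def)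
  have "t < 2"
  proof (rule ccontr)
    assume "\<not> t < 2"
    then have "int n * t \<ge> int n * 2" by (intro mult_left_mono) auto
    then show False using t i j by auto
  qed
  moreover have "t > -2"
  proof (rule ccontr)
    assume "\<not> t > -2"
    then have "int n * t \<le> int n * (-2)" by (intro mult_left_mono) auto
    then show False using t i j by auto
  qed
  ultimately have "t = -1 \<or> t = 0 \<or> t = 1" by auto
  then show ?thesis using t by auto
qed

lemma refl_fix:
  assumes n: "n \<ge> 1"
  shows "card {i\<in>{1..2*n}. refl n k i = i} \<le> 2"
proof (cases "{i\<in>{1..2*n}. refl n k i = i} = {}")
  case True then show ?thesis by (subst True) simp
next
  case False
  then obtain i0 where i0: "i0 \<in> {1..2*n}" "refl n k i0 = i0" by blast
  define i1 where "i1 = (if i0 \<le> n then i0 + n else i0 - n)"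
  have "{i\<in>{1..2*n}. refl n k i = i} \<subseteq> {i0, i1}"
  proof
    fix j assume "j \<in> {i\<in>{1..2*n}. refl n k i = i}"
    then have j: "j \<in> {1..2*n}" "refl n k j = j" by auto
    from refl_fix_pair[OF n j(1) i0(1) j(2) i0(2)] j i0
    show "j \<in> {i0, i1}" unfolding i1_def by auto
  qed
  then have "card {i\<in>{1..2*n}. refl n k i = i} \<le> card {i0, i1}" by (rule card_mono[rotated]) auto
  also have "\<dots> \<le> 2" by (simp add: card_insert_if)
  finally show ?thesis .
qed

lemma rot_props:
  assumes n: "n \<ge> 1" and k: "0 < k" "k < 2*n"
  shows "inj_on (rot n k) {1..2*n}" "rot n k ` {1..2*n} = {1..2*n}"
    "card {i\<in>{1..2*n}. rot n k i = i} \<le> 2"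
proof -
  show "inj_on (rot n k) {1..2*n}" using rot_inj[OF n] .
  then show "rot n k ` {1..2*n} = {1..2*n}" using rot_in[OF n] by (intro endo_inj_surj) auto
  have "{i\<in>{1..2*n}. rot n k i = i} = {}" using rot_nofix[OF n k] by auto
  then show "card {i\<in>{1..2*n}. rot n k i = i} \<le> 2" by (subst \<open>{i\<in>{1..2*n}. rot n k i = i} = {}\<close>) simp
qed

lemma refl_props:
  assumes n: "n \<ge> 1"
  shows "inj_on (refl n k) {1..2*n}" "refl n k ` {1..2*n} = {1..2*n}"
    "card {i\<in>{1..2*n}. refl n k i = i} \<le> 2"
proof -
  show "inj_on (refl n k) {1..2*n}" using refl_inj[OF n] .
  then show "refl n k ` {1..2*n} = {1..2*n}" using refl_in[OF n] by (intro endo_inj_surj) auto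
  show "card {i\<in>{1..2*n}. refl n k i = i} \<le> 2" using refl_fix[OF n] .
qed




definition gen :: "nat \<Rightarrow> bool \<times> nat \<Rightarrow> nat \<Rightarrow> nat" where
  "gen n q = (if fst q then refl n (snd q) else rot n (snd q))"

definition Par :: "nat \<Rightarrow> (bool \<times> nat) set" where
  "Par n = UNIV \<times> {..<2*n}"

lemma card_Par: "card (Par n) = 4*n"
  unfolding Par_def by (simp add: card_cartesian_product)

lemma finite_Par: "finite (Par n)"
  unfolding Par_def by simp

lemma dihedral_gen: "dihedral n = gen n ` Par n"
proof
  show "dihedral n \<subseteq> gen n ` Par n"
  proof
    fix g assume "g \<in> dihedral n"
    then obtain k where "k < 2*n" "g = rot n k \<or> g = refl n k" unfolding dihedral_def by blast
    moreover have "(False,k) \<in> Par n" "(True,k) \<in> Par n" using \<open>k < 2*n\<close> unfolding Par_def by auto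
    moreover have "rot n k = gen n (False,k)" "refl n k = gen n (True,k)" unfolding gen_def by auto
    ultimately show "g \<in> gen n ` Par n" by (metis image_eqI)
  qed
  show "gen n ` Par n \<subseteq> dihedral n"
    unfolding Par_def gen_def dihedral_def by auto
qed

lemma gen_in: "n \<ge> 1 \<Longrightarrow> gen n q i \<in> {1..2*n}"
  unfolding gen_def using rot_in refl_in by auto

lemma gen_res:
  assumes "i \<in> {1..2*n}"
  shows "int (gen n q i) mod (2 * int n) = (if fst q then (int (snd q) + 2 - int i) mod (2 * int n) else (int i + int (snd q)) mod (2 * int n))"
  unfolding gen_def using rot_res[OF assms] refl_res[OF assms] by auto

lemma gen_inj: "n \<ge> 1 \<Longrightarrow> inj_on (gen n q) {1..2*n}"
  unfolding gen_def using rot_inj refl_inj by auto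

lemma gen_surj: assumes n: "n \<ge> 1" shows "gen n q ` {1..2*n} = {1..2*n}"
  using gen_inj[OF n, of q] gen_in[OF n, of q] by (intro endo_inj_surj) auto

lemma gen_comp:
  assumes n: "n \<ge> 1" and q1: "q1 \<in> Par n" and q2: "q2 \<in> Par n"
  shows "\<exists>q3\<in>Par n. \<forall>i\<in>{1..2*n}. gen n q1 (gen n q2 i) = gen n q3 i"
proof -
  obtain b1 k1 where 1: "q1 = (b1,k1)" "k1 < 2*n" using q1 unfolding Par_def by auto
  obtain b2 k2 where 2: "q2 = (b2,k2)" "k2 < 2*n" using q2 unfolding Par_def by auto
  have pos: "0 < 2*n" using n by simp
  have e1: "\<forall>i\<in>{1..2*n}. refl n k1 (refl n k2 i) = rot n ((k1 + 2*n - k2) mod (2*n)) i"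
    using ff[OF n] 2 by simp
  have e2: "\<forall>i\<in>{1..2*n}. refl n k1 (rot n k2 i) = refl n ((k1 + 2*n - k2) mod (2*n)) i"
    using fr[OF n] 2 by simp
  have e3: "\<forall>i\<in>{1..2*n}. rot n k1 (refl n k2 i) = refl n ((k1 + k2) mod (2*n)) i"
    using rf[OF n] by simp
  have e4: "\<forall>i\<in>{1..2*n}. rot n k1 (rot n k2 i) = rot n ((k1 + k2) mod (2*n)) i"
    using rr[OF n] by simp
  have m1: "(k1 + 2*n - k2) mod (2*n) < 2*n" "(k1 + k2) mod (2*n) < 2*n" using pos by auto
  show ?thesis
  proof (cases b1; cases b2)
    assume "b1" "b2"
    then show ?thesis using e1 m1 unfolding 1 2 gen_def Par_def
      by (intro bexI[of _ "(False, (k1 + 2*n - k2) mod (2*n))"]) simp_all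
  next
    assume "b1" "\<not> b2"
    then show ?thesis using e2 m1 unfolding 1 2 gen_def Par_def
      by (intro bexI[of _ "(True, (k1 + 2*n - k2) mod (2*n))"]) simp_all
  next
    assume "\<not> b1" "b2"
    then show ?thesis using e3 m1 unfolding 1 2 gen_def Par_def
      by (intro bexI[of _ "(True, (k1 + k2) mod (2*n))"]) simp_all
  next
    assume "\<not> b1" "\<not> b2"
    then show ?thesis using e4 m1 unfolding 1 2 gen_def Par_def
      by (intro bexI[of _ "(False, (k1 + k2) mod (2*n))"]) simp_all
  qed
qed

lemma gen_id: "n \<ge> 1 \<Longrightarrow> i \<in> {1..2*n} \<Longrightarrow> gen n (False, 0) i = i"
  unfolding gen_def using rot0 by auto

lemma gen_inv:
  assumes n: "n \<ge> 1" and q: "q \<in> Par n"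
  shows "\<exists>q'\<in>Par n. \<forall>i\<in>{1..2*n}. gen n q' (gen n q i) = i"
proof -
  obtain b k where 1: "q = (b,k)" "k < 2*n" using q unfolding Par_def by auto
  have pos: "0 < 2*n" using n by simp
  show ?thesis
  proof (cases b)
    case True
    have "\<forall>i\<in>{1..2*n}. refl n k (refl n k i) = i"
      using ff[OF n, of _ k k] rot0[OF n] 1 by simp
    then show ?thesis using 1 True unfolding gen_def Par_def
      by (intro bexI[of _ "(True, k)"]) auto
  next
    case False
    have e: "((2*n - k) mod (2*n) + k) mod (2*n) = 0"
    proof -
      have "((2*n - k) mod (2*n) + k) mod (2*n) = (2*n - k + k) mod (2*n)" by (simp add: mod_add_left_eq)
      also have "\<dots> = 0" using 1 by simp
      finally show ?thesis .
    qed
    have "\<forall>i\<in>{1..2*n}. rot n ((2*n - k) mod (2*n)) (rot n k i) = i"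
      using rr[OF n, of _ "(2*n - k) mod (2*n)" k] rot0[OF n] e by simp
    then show ?thesis using 1 False pos unfolding gen_def Par_def
      by (intro bexI[of _ "(False, (2*n - k) mod (2*n))"]) auto
  qed
qed

lemma act_cong: "(\<forall>e\<in>M. e \<subseteq> V) \<Longrightarrow> (\<forall>x\<in>V. g x = h x) \<Longrightarrow> act g M = act h M"
  unfolding act_def by (intro image_cong refl) (auto intro!: image_cong)

lemma act_comp: "act g (act h M) = act (\<lambda>x. g (h x)) M"
  unfolding act_def by (simp add: image_image image_comp comp_def)

lemma act_id: "(\<forall>e\<in>M. e \<subseteq> V) \<Longrightarrow> (\<forall>x\<in>V. g x = x) \<Longrightarrow> act g M = M"
  using act_cong[of M V g id] unfolding act_def by simp

lemma act_pm:
  assumes inj: "inj_on g V" and surj: "g ` V = V" and M: "M \<in> pm V"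
  shows "act g M \<in> pm V"
  unfolding pm_def
proof (intro CollectI conjI ballI)
  fix e' assume "e' \<in> act g M"
  then obtain e where e: "e \<in> M" "e' = g ` e" unfolding act_def by blast
  show "e' \<subseteq> V" using e pm_sub[OF M e(1)] surj by blast
  have "inj_on g e" using inj_on_subset[OF inj pm_sub[OF M e(1)]] .
  then show "card e' = 2" using e pm_card[OF M e(1)] by (simp add: card_image)
next
  fix v assume v: "v \<in> V"
  then obtain u where u: "u \<in> V" "v = g u" using surj by blast
  obtain e where e: "e \<in> M" "u \<in> e" using pm_cover[OF M u(1)] by blast
  have ex: "g ` e \<in> act g M \<and> v \<in> g ` e" using e u unfolding act_def by blast
  show "\<exists>!e'. e' \<in> act g M \<and> v \<in> e'"
  proof (rule ex1I[of _ "g ` e"])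
    show "g ` e \<in> act g M \<and> v \<in> g ` e" using ex .
    fix e' assume e': "e' \<in> act g M \<and> v \<in> e'"
    then obtain e2 where e2: "e2 \<in> M" "e' = g ` e2" unfolding act_def by blast
    then obtain u2 where u2: "u2 \<in> e2" "v = g u2" using e' by blast
    have "u2 \<in> V" using pm_sub[OF M e2(1)] u2 by blast
    then have "u2 = u" using inj u u2 unfolding inj_on_def by metis
    then have "e2 = e" using pm_disj[OF M e2(1) e(1), of u] u2(1) e(2) by blast
    then show "e' = g ` e" using e2 by simp
  qed
qed




lemma gen_fix:
  assumes n: "n \<ge> 1" and q: "q \<in> Par n" "q \<noteq> (False, 0)"
  shows "card {i\<in>{1..2*n}. gen n q i = i} \<le> 2"
proof -
  obtain b k where 1: "q = (b,k)" "k < 2*n" using q unfolding Par_def by auto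
  show ?thesis
  proof (cases b)
    case True
    then show ?thesis using refl_props(3)[OF n, of k] 1 unfolding gen_def by simp
  next
    case False
    then have "0 < k" using 1 q by auto
    then show ?thesis using rot_props(3)[OF n _ 1(2)] 1 False unfolding gen_def by simp
  qed
qed

lemma small_dvd:
  assumes "(m::int) > 0" "m dvd x" "\<bar>x\<bar> < m" shows "x = 0"
proof (rule ccontr)
  assume "x \<noteq> 0"
  then have "\<bar>m\<bar> \<le> \<bar>x\<bar>" using dvd_imp_le_int assms(2) by blast
  then show False using assms by simp
qed

lemma param_distinct:
  assumes n: "n \<ge> 2" and q1: "q1 \<in> Par n" and q2: "q2 \<in> Par n"
    and eq: "\<forall>i\<in>{1..2*n}. gen n q1 i = gen n q2 i"
  shows "q1 = q2"
proof -
  obtain b1 k1 where 1: "q1 = (b1,k1)" "k1 < 2*n" using q1 unfolding Par_def by auto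
  obtain b2 k2 where 2: "q2 = (b2,k2)" "k2 < 2*n" using q2 unfolding Par_def by auto
  have i1: "1 \<in> {1..2*n}" and i2: "2 \<in> {1..2*n}" using n by auto
  define N where "N = 2 * int n"
  have Npos: "N > 0" using n unfolding N_def by simp
  have r1: "int (gen n q1 1) mod N = int (gen n q2 1) mod N"
    and r2: "int (gen n q1 2) mod N = int (gen n q2 2) mod N" using eq i1 i2 by auto
  note g1 = gen_res[OF i1, folded N_def] and g2 = gen_res[OF i2, folded N_def]
  show ?thesis
  proof (cases b1; cases b2)
    assume b: "b1" "b2"
    have "(int k1 + 1) mod N = (int k2 + 1) mod N" using r1 g1[of q1] g1[of q2] b 1 2 by (simp add: add.commute)
    then have "N dvd int k1 - int k2" by (simp add: mod_eq_dvd_iff)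
    moreover have "\<bar>int k1 - int k2\<bar> < N" using 1 2 unfolding N_def by (simp add: abs_less_iff)
    ultimately have "int k1 - int k2 = 0" using small_dvd[OF Npos] by blast
    then show ?thesis using 1 2 b by simp
  next
    assume b: "\<not> b1" "\<not> b2"
    have "(1 + int k1) mod N = (1 + int k2) mod N" using r1 g1[of q1] g1[of q2] b 1 2 by (simp add: add.commute)
    then have "N dvd int k1 - int k2" by (simp add: mod_eq_dvd_iff)
    moreover have "\<bar>int k1 - int k2\<bar> < N" using 1 2 unfolding N_def by (simp add: abs_less_iff)
    ultimately have "int k1 - int k2 = 0" using small_dvd[OF Npos] by blast
    then show ?thesis using 1 2 b by simp
  next
    assume b: "b1" "\<not> b2"
    have "(int k1 + 1) mod N = (1 + int k2) mod N" using r1 g1[of q1] g1[of q2] b 1 2 by (simp add: add.commute)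
    then have d1: "N dvd (int k1 + 1) - (1 + int k2)" by (simp only: mod_eq_dvd_iff)
    have "(int k1) mod N = (2 + int k2) mod N" using r2 g2[of q1] g2[of q2] b 1 2 by (simp add: add.commute)
    then have d2: "N dvd int k1 - (2 + int k2)" by (simp only: mod_eq_dvd_iff)
    have "N dvd ((int k1 + 1) - (1 + int k2)) - (int k1 - (2 + int k2))" using d1 d2 by (rule dvd_diff)
    then have "N dvd 2" by simp
    then have "N \<le> 2" using zdvd_imp_le by simp
    then show ?thesis using n unfolding N_def by simp
  next
    assume b: "\<not> b1" "b2"
    have "(1 + int k1) mod N = (int k2 + 1) mod N" using r1 g1[of q1] g1[of q2] b 1 2 by (simp add: add.commute)
    then have d1: "N dvd (1 + int k1) - (int k2 + 1)" by (simp only: mod_eq_dvd_iff)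
    have "(2 + int k1) mod N = (int k2) mod N" using r2 g2[of q1] g2[of q2] b 1 2 by (simp add: add.commute)
    then have d2: "N dvd (2 + int k1) - int k2" by (simp only: mod_eq_dvd_iff)
    have "N dvd ((2 + int k1) - int k2) - ((1 + int k1) - (int k2 + 1))" using d2 d1 by (rule dvd_diff)
    then have "N dvd 2" by simp
    then have "N \<le> 2" using zdvd_imp_le by simp
    then show ?thesis using n unfolding N_def by simp
  qed
qed




lemma rel_iff: "(M, M') \<in> diagram_equiv n \<longleftrightarrow>
   M \<in> pm {1..2*n} \<and> M' \<in> pm {1..2*n} \<and> (\<exists>q\<in>Par n. act (gen n q) M = M')"
  unfolding diagram_equiv_def chord_sets_pm dihedral_gen act_def by blast

lemma act_gen_pm: assumes n: "n \<ge> 1" shows "M \<in> pm {1..2*n} \<Longrightarrow> act (gen n q) M \<in> pm {1..2*n}"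
  by (rule act_pm[OF gen_inj[OF n] gen_surj[OF n]])

lemma pm_subV: "M \<in> pm V \<Longrightarrow> \<forall>e\<in>M. e \<subseteq> V"
  using pm_sub by metis

lemma id_Par: "n \<ge> 1 \<Longrightarrow> (False, 0) \<in> Par n"
  unfolding Par_def by simp

lemma equiv_de:
  assumes n: "n \<ge> 1"
  shows "equiv (chord_sets n) (diagram_equiv n)"
proof (rule equivI)
  show "diagram_equiv n \<subseteq> chord_sets n \<times> chord_sets n"
    unfolding diagram_equiv_def by auto
  show "refl_on (chord_sets n) (diagram_equiv n)"
  proof (rule refl_onI)
    fix M assume M: "M \<in> chord_sets n"
    then have Mp: "M \<in> pm {1..2*n}" using chord_sets_pm by simp
    have "act (gen n (False,0)) M = M" by (rule act_id[OF pm_subV[OF Mp]]) (simp add: gen_id[OF n])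
    then show "(M, M) \<in> diagram_equiv n"
      by (intro rel_iff[THEN iffD2] conjI Mp bexI[OF _ id_Par[OF n]])
  qed
  show "sym (diagram_equiv n)"
  proof (rule symI)
    fix M M' assume "(M, M') \<in> diagram_equiv n"
    then have "M \<in> pm {1..2*n} \<and> M' \<in> pm {1..2*n} \<and> (\<exists>q\<in>Par n. act (gen n q) M = M')"
      by (rule rel_iff[THEN iffD1])
    then obtain q where q: "q \<in> Par n" "act (gen n q) M = M'" and Mp: "M \<in> pm {1..2*n}" "M' \<in> pm {1..2*n}"
      by blast
    obtain q' where q': "q' \<in> Par n" "\<forall>i\<in>{1..2*n}. gen n q' (gen n q i) = i" using gen_inv[OF n q(1)] by blast
    have "act (gen n q') M' = act (gen n q') (act (gen n q) M)" using q(2) by simp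
    also have "\<dots> = act (\<lambda>x. gen n q' (gen n q x)) M" by (rule act_comp)
    also have "\<dots> = M" by (rule act_id[OF pm_subV[OF Mp(1)]]) (use q'(2) in simp)
    finally show "(M', M) \<in> diagram_equiv n"
      by (intro rel_iff[THEN iffD2] conjI Mp bexI[OF _ q'(1)])
  qed
  show "trans (diagram_equiv n)"
  proof (rule transI)
    fix M1 M2 M3 assume a1: "(M1, M2) \<in> diagram_equiv n" and a2: "(M2, M3) \<in> diagram_equiv n"
    have "M1 \<in> pm {1..2*n} \<and> M2 \<in> pm {1..2*n} \<and> (\<exists>q\<in>Par n. act (gen n q) M1 = M2)"
      using a1 by (rule rel_iff[THEN iffD1])
    moreover have "M2 \<in> pm {1..2*n} \<and> M3 \<in> pm {1..2*n} \<and> (\<exists>q\<in>Par n. act (gen n q) M2 = M3)"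
      using a2 by (rule rel_iff[THEN iffD1])
    ultimately obtain q1 q2 where q: "q1 \<in> Par n" "act (gen n q1) M1 = M2" "q2 \<in> Par n" "act (gen n q2) M2 = M3"
      and Mp: "M1 \<in> pm {1..2*n}" "M3 \<in> pm {1..2*n}"
      by blast
    obtain q3 where q3: "q3 \<in> Par n" "\<forall>i\<in>{1..2*n}. gen n q2 (gen n q1 i) = gen n q3 i"
      using gen_comp[OF n q(3) q(1)] by blast
    have "M3 = act (gen n q2) (act (gen n q1) M1)" using q by simp
    also have "\<dots> = act (\<lambda>x. gen n q2 (gen n q1 x)) M1" by (rule act_comp)
    also have "\<dots> = act (gen n q3) M1" by (rule act_cong[OF pm_subV[OF Mp(1)]]) (use q3(2) in simp)
    finally have "act (gen n q3) M1 = M3" by simp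
    then show "(M1, M3) \<in> diagram_equiv n"
      by (intro rel_iff[THEN iffD2] conjI Mp bexI[OF _ q3(1)])
  qed
qed

lemma class_sub: "diagram_equiv n `` {M} \<subseteq> (\<lambda>q. act (gen n q) M) ` Par n"
proof
  fix M' assume "M' \<in> diagram_equiv n `` {M}"
  then have "(M, M') \<in> diagram_equiv n" by simp
  then have "\<exists>q\<in>Par n. act (gen n q) M = M'" using rel_iff by simp
  then show "M' \<in> (\<lambda>q. act (gen n q) M) ` Par n" by blast
qed

lemma class_card_le:
  "card (diagram_equiv n `` {M}) \<le> 4*n"
proof -
  have "card (diagram_equiv n `` {M}) \<le> card ((\<lambda>q. act (gen n q) M) ` Par n)"
    by (rule card_mono[OF finite_imageI[OF finite_Par] class_sub])
  also have "\<dots> \<le> card (Par n)" by (rule card_image_le[OF finite_Par])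
  finally show ?thesis using card_Par by simp
qed

lemma finite_A: "finite (chord_sets n)"
  unfolding chord_sets_pm by (rule finite_pm) simp

lemma card_A: "card (chord_sets n) = odd_dfact n"
  unfolding chord_sets_pm by (rule card_pm) auto

lemma lower:
  assumes n: "n \<ge> 1"
  shows "odd_dfact n \<le> 4*n * d_num n"
proof -
  let ?A = "chord_sets n" and ?r = "diagram_equiv n"
  have eq: "equiv ?A ?r" by (rule equiv_de[OF n])
  have "odd_dfact n = card (\<Union>(?A // ?r))" using Union_quotient[OF eq] card_A by simp
  also have "\<dots> \<le> sum card (?A // ?r)" by (rule card_Union_le_sum_card)
  also have "\<dots> \<le> sum (\<lambda>_. 4*n) (?A // ?r)"
    by (rule sum_mono) (auto elim!: quotientE intro: class_card_le)
  also have "\<dots> = 4*n * d_num n" unfolding d_num_def by simp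
  finally show ?thesis .
qed




definition Bad :: "nat \<Rightarrow> nat set set set" where
  "Bad n = {M \<in> pm {1..2*n}. \<exists>q\<in>Par n - {(False,0)}. act (gen n q) M = M}"

lemma card_Bad:
  assumes n: "n \<ge> 1"
  shows "card (Bad n) \<le> 4*n * aseq n"
proof -
  let ?V = "{1..2*n}" and ?P = "Par n - {(False,0)}"
  have sub: "Bad n \<subseteq> (\<Union>q\<in>?P. inv_pm (gen n q) ?V)"
    unfolding Bad_def inv_pm_def by blast
  have finP: "finite ?P" using finite_Par by simp
  have each: "card (inv_pm (gen n q) ?V) \<le> aseq n" if q: "q \<in> ?P" for q
  proof (rule inv_bound)
    show "finite ?V" by simp
    show "inj_on (gen n q) ?V" by (rule gen_inj[OF n])
    show "gen n q ` ?V = ?V" by (rule gen_surj[OF n])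
    show "card {x\<in>?V. gen n q x = x} \<le> 2" using gen_fix[OF n] q by blast
    show "card ?V \<le> 2*n" by simp
  qed
  have "card (Bad n) \<le> card (\<Union>q\<in>?P. inv_pm (gen n q) ?V)"
  proof (rule card_mono[OF _ sub])
    show "finite (\<Union>q\<in>?P. inv_pm (gen n q) ?V)"
      using finP finite_pm[of ?V] unfolding inv_pm_def by auto
  qed
  also have "\<dots> \<le> (\<Sum>q\<in>?P. card (inv_pm (gen n q) ?V))" by (rule card_UN_le[OF finP])
  also have "\<dots> \<le> (\<Sum>q\<in>?P. aseq n)" by (rule sum_mono) (rule each)
  also have "\<dots> = card ?P * aseq n" by simp
  also have "\<dots> \<le> 4*n * aseq n"
  proof (rule mult_right_mono)
    have "card ?P \<le> card (Par n)" by (rule card_mono[OF finite_Par]) auto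
    then show "card ?P \<le> 4*n" using card_Par by simp
  qed simp
  finally show ?thesis .
qed

lemma good_inj:
  assumes n: "n \<ge> 2" and M: "M \<in> pm {1..2*n}" and good: "M \<notin> Bad n"
  shows "inj_on (\<lambda>q. act (gen n q) M) (Par n)"
proof (rule inj_onI)
  fix q1 q2 assume q1: "q1 \<in> Par n" and q2: "q2 \<in> Par n" and e: "act (gen n q1) M = act (gen n q2) M"
  have n1: "n \<ge> 1" using n by simp
  obtain q' where q': "q' \<in> Par n" "\<forall>i\<in>{1..2*n}. gen n q' (gen n q1 i) = i" using gen_inv[OF n1 q1] by blast
  obtain q3 where q3: "q3 \<in> Par n" "\<forall>i\<in>{1..2*n}. gen n q' (gen n q2 i) = gen n q3 i"
    using gen_comp[OF n1 q'(1) q2] by blast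
  have "M = act (\<lambda>x. gen n q' (gen n q1 x)) M"
    by (rule act_id[OF pm_subV[OF M], symmetric]) (use q'(2) in simp)
  also have "\<dots> = act (gen n q') (act (gen n q1) M)" by (rule act_comp[symmetric])
  also have "\<dots> = act (gen n q') (act (gen n q2) M)" using e by simp
  also have "\<dots> = act (\<lambda>x. gen n q' (gen n q2 x)) M" by (rule act_comp)
  also have "\<dots> = act (gen n q3) M" by (rule act_cong[OF pm_subV[OF M]]) (use q3(2) in simp)
  finally have fixM: "act (gen n q3) M = M" by simp
  have "q3 = (False, 0)"
  proof (rule ccontr)
    assume "q3 \<noteq> (False, 0)"
    then have "M \<in> Bad n" unfolding Bad_def using M q3(1) fixM by blast
    then show False using good by simp
  qed
  then have id2: "\<forall>i\<in>{1..2*n}. gen n q' (gen n q2 i) = i" using q3(2) gen_id[OF n1] by simp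
  have "\<forall>i\<in>{1..2*n}. gen n q1 i = gen n q2 i"
  proof
    fix i assume i: "i \<in> {1..2*n}"
    have "gen n q' (gen n q1 i) = gen n q' (gen n q2 i)" using q'(2) id2 i by simp
    then show "gen n q1 i = gen n q2 i"
      using gen_inj[OF n1, of q'] gen_in[OF n1] unfolding inj_on_def by blast
  qed
  then show "q1 = q2" by (rule param_distinct[OF n q1 q2])
qed

lemma upper:
  assumes n: "n \<ge> 2"
  shows "4*n * d_num n \<le> 4*n * card (Bad n) + odd_dfact n"
proof -
  have n1: "n \<ge> 1" using n by simp
  let ?A = "chord_sets n" and ?r = "diagram_equiv n"
  have eq: "equiv ?A ?r" by (rule equiv_de[OF n1])
  have finQ: "finite (?A // ?r)"
    by (rule finite_quotient[OF finite_A]) (use eq in \<open>simp add: equiv_def\<close>)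
  define Q1 where "Q1 = {X \<in> ?A // ?r. X \<inter> Bad n \<noteq> {}}"
  define Q2 where "Q2 = {X \<in> ?A // ?r. X \<inter> Bad n = {}}"
  have QU: "?A // ?r = Q1 \<union> Q2" unfolding Q1_def Q2_def by blast
  have c1: "card Q1 \<le> card (Bad n)"
  proof -
    have "Q1 \<subseteq> (\<lambda>b. ?r `` {b}) ` Bad n"
    proof
      fix X assume X: "X \<in> Q1"
      then obtain b where b: "b \<in> X" "b \<in> Bad n" unfolding Q1_def by blast
      from X have "X \<in> ?A // ?r" unfolding Q1_def by blast
      then obtain x where x: "X = ?r `` {x}" "x \<in> ?A" by (rule quotientE)
      then have "(x, b) \<in> ?r" using b by simp
      then have "?r `` {x} = ?r `` {b}" using equiv_class_eq_iff[OF eq] by blast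
      then show "X \<in> (\<lambda>b. ?r `` {b}) ` Bad n" using x b by blast
    qed
    then have "card Q1 \<le> card ((\<lambda>b. ?r `` {b}) ` Bad n)"
      by (rule card_mono[rotated]) (simp add: Bad_def finite_pm)
    also have "\<dots> \<le> card (Bad n)" by (rule card_image_le) (simp add: Bad_def finite_pm)
    finally show ?thesis .
  qed
  have big: "4*n \<le> card X" if X: "X \<in> Q2" for X
  proof -
    from X have XQ: "X \<in> ?A // ?r" and XB: "X \<inter> Bad n = {}" unfolding Q2_def by auto
    then obtain x where x: "X = ?r `` {x}" "x \<in> ?A" by (metis quotientE)
    have xX: "x \<in> X" using equiv_class_self[OF eq x(2)] x(1) by simp
    then have xg: "x \<notin> Bad n" using XB by blast
    have xp: "x \<in> pm {1..2*n}" using x(2) chord_sets_pm by simp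
    have "(\<lambda>q. act (gen n q) x) ` Par n \<subseteq> X"
    proof
      fix y assume "y \<in> (\<lambda>q. act (gen n q) x) ` Par n"
      then obtain q where q: "q \<in> Par n" "y = act (gen n q) x" by blast
      have "y \<in> pm {1..2*n}" using act_gen_pm[OF n1 xp] q by simp
      then have "(x, y) \<in> ?r" by (intro rel_iff[THEN iffD2] conjI xp bexI[OF _ q(1)]) (use q in simp)+
      then show "y \<in> X" using x by simp
    qed
    then have "card ((\<lambda>q. act (gen n q) x) ` Par n) \<le> card X"
      by (rule card_mono[rotated]) (use XQ finite_A in \<open>metis Union_quotient[OF eq] Union_upper finite_subset\<close>)
    moreover have "card ((\<lambda>q. act (gen n q) x) ` Par n) = 4*n"
      using card_image[OF good_inj[OF n xp xg]] card_Par by simp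
    ultimately show ?thesis by simp
  qed
  have c2: "4*n * card Q2 \<le> odd_dfact n"
  proof -
    have "4*n * card Q2 = (\<Sum>X\<in>Q2. 4*n)" by simp
    also have "\<dots> \<le> (\<Sum>X\<in>Q2. card X)" by (rule sum_mono) (rule big)
    also have "\<dots> = card (\<Union>Q2)"
    proof (rule card_Union_disjoint[symmetric])
      show "pairwise disjnt Q2"
        unfolding pairwise_def disjnt_def Q2_def using quotient_disj[OF eq] by blast
      show "\<And>X. X \<in> Q2 \<Longrightarrow> finite X"
        unfolding Q2_def using Union_quotient[OF eq] finite_A by (metis (no_types, lifting) Union_upper finite_subset mem_Collect_eq)
    qed
    also have "\<dots> \<le> card ?A"
      by (rule card_mono[OF finite_A]) (use Union_quotient[OF eq] in \<open>auto simp: Q2_def\<close>)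
    also have "\<dots> = odd_dfact n" by (rule card_A)
    finally show ?thesis .
  qed
  have "d_num n \<le> card Q1 + card Q2"
    unfolding d_num_def QU by (rule card_Un_le)
  then have "4*n * d_num n \<le> 4*n * card Q1 + 4*n * card Q2"
    by (metis add_mult_distrib2 mult_le_mono2)
  also have "\<dots> \<le> 4*n * card (Bad n) + odd_dfact n" using c1 c2 by (intro add_mono) auto
  finally show ?thesis .
qed




lemma aseq_mono: "aseq k \<le> aseq (Suc k)"
  by (cases k) auto

lemma aseq_Suc_le: "aseq (Suc m) \<le> (2*m+3) * aseq m"
proof (cases m)
  case 0 then show ?thesis by simp
next
  case (Suc j)
  have "aseq (Suc m) = aseq (Suc j) + (2*j+4) * aseq j" using Suc by simp
  also have "\<dots> \<le> aseq (Suc j) + (2*j+4) * aseq (Suc j)" using aseq_mono[of j] by simp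
  also have "\<dots> = (2*m+3) * aseq m" using Suc by (simp add: algebra_simps)
  finally show ?thesis .
qed

lemma aseq_step: "aseq (Suc (Suc m)) * m \<le> aseq m * ((2*m+1)*(2*m+3))"
proof -
  have "aseq (Suc (Suc m)) = aseq (Suc m) + (2*m+4) * aseq m" by simp
  also have "\<dots> \<le> (2*m+3) * aseq m + (2*m+4) * aseq m" using aseq_Suc_le[of m] by simp
  also have "\<dots> = (4*m+7) * aseq m" by (simp add: algebra_simps)
  finally have "aseq (Suc (Suc m)) \<le> (4*m+7) * aseq m" .
  then have "aseq (Suc (Suc m)) * m \<le> (4*m+7) * aseq m * m" by simp
  also have "\<dots> = aseq m * ((4*m+7)*m)" by (simp add: algebra_simps)
  also have "\<dots> \<le> aseq m * ((2*m+1)*(2*m+3))"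
    by (rule mult_left_mono) (simp_all add: algebra_simps)
  finally show ?thesis .
qed

lemma odf_pos: "odd_dfact m > 0"
  unfolding odd_dfact_def by (simp add: prod_pos)

lemma odf_step: "odd_dfact (Suc (Suc m)) = (2*m+1)*(2*m+3) * odd_dfact m"
  by (simp add: odd_dfact_Suc algebra_simps)

definition sr :: "nat \<Rightarrow> real" where
  "sr m = real (aseq m) / real (odd_dfact m)"

lemma sr_nonneg: "sr m \<ge> 0"
  unfolding sr_def by simp

lemma sr_step: "sr (Suc (Suc m)) * real m \<le> sr m"
proof -
  have p: "real (odd_dfact m) > 0" using odf_pos by simp
  have q: "real ((2*m+1)*(2*m+3)) > 0" by (rule of_nat_0_less_iff[THEN iffD2]) simp
  have "real (aseq (Suc (Suc m)) * m) \<le> real (aseq m * ((2*m+1)*(2*m+3)))"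
    using aseq_step by (rule of_nat_mono)
  then have "real (aseq (Suc (Suc m))) * real m \<le> real (aseq m) * real ((2*m+1)*(2*m+3))" by simp
  then have "real (aseq (Suc (Suc m))) * real m / (real ((2*m+1)*(2*m+3)) * real (odd_dfact m))
      \<le> real (aseq m) * real ((2*m+1)*(2*m+3)) / (real ((2*m+1)*(2*m+3)) * real (odd_dfact m))"
    using p q by (intro divide_right_mono) auto
  also have "\<dots> = sr m" unfolding sr_def using q by simp
  finally show ?thesis unfolding sr_def odf_step by (simp add: mult_ac)
qed

lemma sr_le: "m \<ge> 1 \<Longrightarrow> sr (Suc (Suc m)) \<le> sr m"
proof -
  assume m: "m \<ge> 1"
  have "sr (Suc (Suc m)) * 1 \<le> sr (Suc (Suc m)) * real m"
    using m sr_nonneg[of "Suc (Suc m)"] by (intro mult_left_mono) auto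
  then show ?thesis using sr_step[of m] by simp
qed

definition SB :: real where "SB = max (sr 1) (sr 2)"

lemma sr_bound: "m \<ge> 1 \<Longrightarrow> sr m \<le> SB"
proof (induction m rule: less_induct)
  case (less m)
  show ?case
  proof (cases "m \<le> 2")
    case True
    then have "m = 1 \<or> m = 2" using less.prems by auto
    then show ?thesis unfolding SB_def by auto
  next
    case False
    define j where "j = m - 2"
    have j: "m = Suc (Suc j)" "j \<ge> 1" using False unfolding j_def by auto
    then have "sr m \<le> sr j" using sr_le by simp
    also have "\<dots> \<le> SB" using less.IH[of j] j by simp
    finally show ?thesis .
  qed
qed

lemma sr_cube:
  assumes m: "m \<ge> 12"
  shows "sr m * real m ^ 3 \<le> 8 * SB"
proof -
  define j where "j = m - 6"
  have j: "m = j + 6" using m unfolding j_def by simp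
  have j6: "j \<ge> 6" using m j by simp
  have s1: "sr (j+6) * real (j+4) \<le> sr (j+4)" using sr_step[of "j+4"] by (simp add: numeral_eq_Suc)
  have s2: "sr (j+4) * real (j+2) \<le> sr (j+2)" using sr_step[of "j+2"] by (simp add: numeral_eq_Suc)
  have s3: "sr (j+2) * real j \<le> sr j" using sr_step[of "j"] by (simp add: numeral_eq_Suc)
  have s4: "sr j \<le> SB" using sr_bound j6 by simp
  have n0: "sr (j+6) \<ge> 0" "sr (j+4) \<ge> 0" "sr (j+2) \<ge> 0" using sr_nonneg by auto
  have "sr (j+6) * (real (j+4) * real (j+2) * real j) \<le> SB"
  proof -
    have "sr (j+6) * (real (j+4) * real (j+2) * real j) = ((sr (j+6) * real (j+4)) * real (j+2)) * real j"
      by (simp add: mult_ac)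
    also have "\<dots> \<le> (sr (j+4) * real (j+2)) * real j"
      using s1 by (intro mult_right_mono) auto
    also have "\<dots> \<le> sr (j+2) * real j" using s2 by (intro mult_right_mono) auto
    also have "\<dots> \<le> sr j" using s3 .
    also have "\<dots> \<le> SB" using s4 .
    finally show ?thesis .
  qed
  moreover have "real m ^ 3 \<le> 8 * (real (j+4) * real (j+2) * real j)"
  proof -
    have a: "real m \<le> 2 * real j" "real m \<le> 2 * real (j+2)" "real m \<le> 2 * real (j+4)" using j j6 by auto
    have "real m ^ 3 = real m * real m * real m" by (simp add: power3_eq_cube)
    also have "\<dots> \<le> (2 * real (j+4)) * (2 * real (j+2)) * (2 * real j)"
      using a by (intro mult_mono) auto
    also have "\<dots> = 8 * (real (j+4) * real (j+2) * real j)" by (simp add: algebra_simps)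
    finally show ?thesis .
  qed
  ultimately have "sr m * real m ^ 3 \<le> sr m * (8 * (real (j+4) * real (j+2) * real j))"
    using sr_nonneg by (intro mult_left_mono) auto
  also have "\<dots> = 8 * (sr (j+6) * (real (j+4) * real (j+2) * real j))" using j by simp
  also have "\<dots> \<le> 8 * SB" using \<open>sr (j+6) * _ \<le> SB\<close> by simp
  finally show ?thesis .
qed

lemma f_lim: "(\<lambda>n. 16 * real n ^ 2 * sr n) \<longlonglongrightarrow> 0"
proof (rule tendsto_sandwich[of "\<lambda>_. 0" _ _ "\<lambda>n. 128 * SB / real n"])
  show "eventually (\<lambda>n. 0 \<le> 16 * real n ^ 2 * sr n) sequentially"
    using sr_nonneg by simp
  show "eventually (\<lambda>n. 16 * real n ^ 2 * sr n \<le> 128 * SB / real n) sequentially"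
  proof (rule eventually_sequentiallyI[of 12])
    fix n :: nat assume n: "n \<ge> 12"
    have pos: "real n > 0" using n by simp
    have "16 * real n ^ 2 * sr n * real n = 16 * (sr n * real n ^ 3)" by (simp add: power2_eq_square power3_eq_cube)
    also have "\<dots> \<le> 16 * (8 * SB)" using sr_cube[OF n] by simp
    finally have "16 * real n ^ 2 * sr n * real n \<le> 128 * SB" by simp
    then show "16 * real n ^ 2 * sr n \<le> 128 * SB / real n" using pos by (simp add: field_simps)
  qed
  show "(\<lambda>_. 0) \<longlonglongrightarrow> (0::real)" by simp
  show "(\<lambda>n. 128 * SB / real n) \<longlonglongrightarrow> 0" by (rule lim_const_over_n)
qed




theorem corollary2:
  shows "(\<forall>n\<ge>1. real (d_num n) \<ge> real (odd_dfact n) / (4 * real n)) \<and>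
         (\<lambda>n. real (d_num n)) \<sim>[at_top] (\<lambda>n. real (odd_dfact n) / (4 * real n))"
proof
  show "\<forall>n\<ge>1. real (d_num n) \<ge> real (odd_dfact n) / (4 * real n)"
  proof (intro allI impI)
    fix n :: nat assume n: "n \<ge> 1"
    have "real (odd_dfact n) \<le> real (4*n * d_num n)" using lower[OF n] by (rule of_nat_mono)
    then have "real (odd_dfact n) \<le> (4 * real n) * real (d_num n)" by simp
    moreover have "4 * real n > 0" using n by simp
    ultimately show "real (odd_dfact n) / (4 * real n) \<le> real (d_num n)"
      by (simp add: pos_divide_le_eq mult.commute)
  qed
  define L where "L = (\<lambda>n. real (odd_dfact n) / (4 * real n))"
  define U where "U = (\<lambda>n. L n + 4 * real n * real (aseq n))"
  have ev: "eventually (\<lambda>n. real (d_num n) \<in> {L n..U n}) at_top"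
  proof (rule eventually_sequentiallyI[of 2])
    fix n :: nat assume n: "n \<ge> 2"
    have n1: "n \<ge> 1" using n by simp
    have pos: "4 * real n > 0" using n by simp
    have lo: "L n \<le> real (d_num n)"
    proof -
      have "real (odd_dfact n) \<le> real (4*n * d_num n)" using lower[OF n1] by (rule of_nat_mono)
      then have "real (odd_dfact n) \<le> (4 * real n) * real (d_num n)" by simp
      then show ?thesis unfolding L_def using pos by (simp add: pos_divide_le_eq mult.commute)
    qed
    have hi: "real (d_num n) \<le> U n"
    proof -
      have "4*n * d_num n \<le> 4*n * card (Bad n) + odd_dfact n" by (rule upper[OF n])
      also have "\<dots> \<le> 4*n * (4*n * aseq n) + odd_dfact n" using card_Bad[OF n1] by simp
      finally have "real (4*n * d_num n) \<le> real (4*n * (4*n * aseq n) + odd_dfact n)" by (rule of_nat_mono)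
      then have "(4 * real n) * real (d_num n) \<le> (4 * real n) * (4 * real n * real (aseq n)) + real (odd_dfact n)"
        by simp
      then have "real (d_num n) \<le> ((4 * real n) * (4 * real n * real (aseq n)) + real (odd_dfact n)) / (4 * real n)"
        using pos by (simp add: pos_le_divide_eq mult.commute)
      also have "\<dots> = U n" unfolding U_def L_def using pos by (simp add: field_simps)
      finally show ?thesis .
    qed
    show "real (d_num n) \<in> {L n..U n}" using lo hi by simp
  qed
  have UL: "U \<sim>[at_top] L"
  proof (rule asymp_equivI')
    have lim: "(\<lambda>n. 1 + 16 * real n ^ 2 * sr n) \<longlonglongrightarrow> 1 + 0"
      by (rule tendsto_add[OF tendsto_const f_lim])
    have evq: "eventually (\<lambda>n. 1 + 16 * real n ^ 2 * sr n = U n / L n) at_top"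
    proof (rule eventually_sequentiallyI[of 1])
      fix n :: nat assume n: "n \<ge> 1"
      have p1: "real (odd_dfact n) > 0" using odf_pos by simp
      have p2: "real n > 0" using n by simp
      show "1 + 16 * real n ^ 2 * sr n = U n / L n"
        unfolding U_def L_def sr_def using p1 p2 by (simp add: field_simps power2_eq_square)
    qed
    show "((\<lambda>n. U n / L n) \<longlongrightarrow> 1) at_top"
      using tendsto_cong[OF evq] lim by simp
  qed
  have "(\<lambda>n. real (d_num n)) \<sim>[at_top] L"
    by (rule asymp_equiv_sandwich_real[OF asymp_equiv_refl UL ev])
  then show "(\<lambda>n. real (d_num n)) \<sim>[at_top] (\<lambda>n. real (odd_dfact n) / (4 * real n))"
    unfolding L_def .
qed



end
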